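(* Let $(m_n)_{n\ge0}$ be a sequence of positive reals and $M_n:=\sum_{i=0}^n m_i$. Let $(A_n)_{n\ge0}$ be positive real random variables with $A_0\le m_0$ such that for every $n\ge0$, conditionally on $A_0,\dots,A_n$, $A_{n+1}=A_n+m_{n+1}$ with probability $A_n/M_n$ and $A_{n+1}=A_n$ with probability $(M_n-A_n)/M_n$. (a) If $\sum_{n\ge0}m_n^2/M_n^2<\infty$, then almost surely, for every $a\ge0$ and $t\ge0$, $$\mathbb P\Big(\sup_{i\ge a}\Big|\frac{A_i}{M_i}-\frac{A_a}{M_a}\Big|>t\frac{A_a}{M_a}\,\Big|\,A_a\Big)\le 2\exp\left(-\frac{\frac{t^2}{4}\frac{A_a}{M_a}}{\sum_{n>a}\frac{m_n^2}{M_n^2}+t\max\Big(\sum_{n>a}\frac{m_n^2}{M_n^2},\ \max_{n>a}\frac{m_n}{M_n}\Big)}\right).$$ (b) If $(m_n)_{n\ge0}$ is bounded, then almost surely, for every $a\ge0$ and $t\ge0$, $$\mathbb P\Big(\sup_{i\ge a}\Big|\frac{A_i}{M_i}-\frac{A_a}{M_a}\Big|>t\frac{A_a}{M_a}\,\Big|\,A_a\Big)\le 2\exp\left(-\frac{t^2}{4(1+t)}\,\frac{A_a}{\max_{n>a}m_n}\right).$$ *)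

theory Defs
  imports "HOL-Probability.Probability"
begin

definition gen_alg :: "'w measure \<Rightarrow> ('i \<Rightarrow> 'w \<Rightarrow> real) \<Rightarrow> 'i set \<Rightarrow> 'w measure" where
  "gen_alg P X I = sigma (space P) {X i -` B \<inter> space P | i B. i \<in> I \<and> B \<in> sets borel}"

definition cond_prob :: "'w measure \<Rightarrow> 'w measure \<Rightarrow> 'w set \<Rightarrow> 'w \<Rightarrow> real" where
  "cond_prob P F E = real_cond_exp P F (indicator E)"

end

theory Submission
  imports Defs
begin


lemma exp_le_quad: fixes y :: real assumes "y \<le> 1" shows "exp y \<le> 1 + y + y\<^sup>2"
proof (cases "y \<ge> 0")
  case True thus ?thesis using exp_bound[of y] assms by (simp add: power2_eq_square)
next
  case False
  define u where "u = - y"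
  have u: "u > 0" using False u_def by simp
  show ?thesis
  proof (cases "u \<ge> 1")
    case True
    have "exp y \<le> 1" using False by simp
    also have "1 \<le> 1 + y + y\<^sup>2"
    proof -
      have "0 \<le> (-y) * (-y - 1)" using True u_def by (intro mult_nonneg_nonneg) auto
      thus ?thesis by (simp add: power2_eq_square algebra_simps)
    qed
    finally show ?thesis .
  next
    case False
    have e: "1 + u + u\<^sup>2/2 \<le> exp u" using exp_lower_Taylor_quadratic[of u] u by simp
    have pos: "0 < 1 + u + u\<^sup>2/2" using u by (simp add: add_pos_nonneg)
    have "1 \<le> (1 - u + u\<^sup>2) * (1 + u + u\<^sup>2/2)"
    proof -
      have "(1 - u + u\<^sup>2) * (1 + u + u\<^sup>2/2) = 1 + u\<^sup>2/2 + u^3/2 + u^4/2"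
        by (simp add: field_simps power2_eq_square power3_eq_cube power4_eq_xxxx)
      moreover have "0 \<le> u\<^sup>2/2 + u^3/2 + u^4/2" using u by simp
      ultimately show ?thesis by linarith
    qed
    also have "\<dots> \<le> (1 - u + u\<^sup>2) * exp u"
    proof (rule mult_left_mono[OF e])
      have "0 \<le> (1 - u) + u\<^sup>2" using False by simp
      thus "0 \<le> 1 - u + u\<^sup>2" by simp
    qed
    finally have "1 \<le> (1 - u + u\<^sup>2) * exp u" .
    hence "exp (-u) \<le> 1 - u + u\<^sup>2"
      by (simp add: exp_minus field_simps)
    thus ?thesis using u_def by simp
  qed
qed

lemma two_point:
  fixes x c l :: real
  assumes "0 < x" "x \<le> 1" "0 \<le> c" "\<bar>l\<bar> * c \<le> 1"
  shows "x * exp (l * c * (1 - x)) + (1 - x) * exp (- (l * c * x)) \<le> exp (l\<^sup>2 * c\<^sup>2 * x)"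
proof -
  have b1: "\<bar>l * c * (1 - x)\<bar> \<le> 1"
  proof -
    have "\<bar>l * c * (1 - x)\<bar> = \<bar>l\<bar> * c * (1 - x)" using assms by (simp add: abs_mult)
    also have "\<dots> \<le> \<bar>l\<bar> * c" using assms by (simp add: mult_left_le)
    finally show ?thesis using assms by linarith
  qed
  have b2: "\<bar>l * c * x\<bar> \<le> 1"
  proof -
    have "\<bar>l * c * x\<bar> = \<bar>l\<bar> * c * x" using assms by (simp add: abs_mult)
    also have "\<dots> \<le> \<bar>l\<bar> * c" using assms by (simp add: mult_left_le)
    finally show ?thesis using assms by linarith
  qed
  have e1: "exp (l * c * (1 - x)) \<le> 1 + l * c * (1 - x) + (l * c * (1 - x))\<^sup>2"
    using b1 by (intro exp_le_quad) simp
  have e2: "exp (- (l * c * x)) \<le> 1 + (- (l * c * x)) + (- (l * c * x))\<^sup>2"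
    using b2 by (intro exp_le_quad) simp
  have "x * exp (l * c * (1 - x)) + (1 - x) * exp (- (l * c * x))
      \<le> x * (1 + l * c * (1 - x) + (l * c * (1 - x))\<^sup>2) + (1 - x) * (1 + (- (l * c * x)) + (- (l * c * x))\<^sup>2)"
    using assms e1 e2 by (intro add_mono mult_left_mono) auto
  also have "\<dots> = 1 + l\<^sup>2 * c\<^sup>2 * x * (1 - x)"
    by (simp add: algebra_simps power2_eq_square)
  also have "\<dots> \<le> 1 + l\<^sup>2 * c\<^sup>2 * x"
    using assms by (simp add: mult_left_le)
  also have "\<dots> \<le> exp (l\<^sup>2 * c\<^sup>2 * x)" by simp
  finally show ?thesis .
qed



lemma gen_alg_space[simp]: "space (gen_alg P X I) = space P"
  unfolding gen_alg_def by (rule space_measure_of) auto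

lemma sets_gen_alg: "sets (gen_alg P X I) = sigma_sets (space P) {X i -` B \<inter> space P | i B. i \<in> I \<and> B \<in> sets borel}"
  unfolding gen_alg_def by (rule sets_measure_of) auto

lemma gen_alg_sub:
  assumes "\<And>i. i \<in> I \<Longrightarrow> X i \<in> borel_measurable P"
  shows "sets (gen_alg P X I) \<subseteq> sets P"
  unfolding sets_gen_alg
proof (rule sets.sigma_sets_subset)
  show "{X i -` B \<inter> space P |i B. i \<in> I \<and> B \<in> sets borel} \<subseteq> sets P"
  proof
    fix S assume "S \<in> {X i -` B \<inter> space P |i B. i \<in> I \<and> B \<in> sets borel}"
    then obtain i B where "S = X i -` B \<inter> space P" "i \<in> I" "B \<in> sets borel" by blast
    thus "S \<in> sets P" using assms measurable_sets by metis
  qed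
qed

lemma gen_alg_mono:
  assumes "I \<subseteq> J"
  shows "sets (gen_alg P X I) \<subseteq> sets (gen_alg P X J)"
  unfolding sets_gen_alg
proof (rule sigma_sets_mono')
  show "{X i -` B \<inter> space P |i B. i \<in> I \<and> B \<in> sets borel} \<subseteq> {X i -` B \<inter> space P |i B. i \<in> J \<and> B \<in> sets borel}"
    using assms by auto
qed

lemma gen_alg_meas:
  assumes "i \<in> I"
  shows "X i \<in> borel_measurable (gen_alg P X I)"
proof (rule measurableI)
  fix B :: "real set" assume "B \<in> sets borel"
  thus "X i -` B \<inter> space (gen_alg P X I) \<in> sets (gen_alg P X I)"
    unfolding sets_gen_alg gen_alg_space using assms by (intro sigma_sets.Basic) blast
qed simp

lemma gen_alg_subalg:
  assumes "prob_space P" "\<And>i. i \<in> I \<Longrightarrow> X i \<in> borel_measurable P"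
  shows "sigma_finite_subalgebra P (gen_alg P X I)"
proof -
  interpret prob_space P by fact
  have "subalgebra P (gen_alg P X I)"
    unfolding subalgebra_def using gen_alg_sub[OF assms(2)] by simp
  hence "finite_measure_subalgebra P (gen_alg P X I)"
    unfolding finite_measure_subalgebra_def finite_measure_subalgebra_axioms_def
    using finite_measure_axioms by simp
  thus ?thesis by (rule finite_measure_subalgebra_is_sigma_finite)
qed

lemma meas_from_sub:
  assumes "sets F \<subseteq> sets M" "space F = space M" "f \<in> borel_measurable F"
  shows "f \<in> borel_measurable M"
  by (rule measurable_from_subalg[of M F]) (use assms in \<open>simp_all add: subalgebra_def\<close>)

lemma meas_mono_sets:
  assumes "sets F \<subseteq> sets G" "space F = space G" "f \<in> borel_measurable F"
  shows "f \<in> borel_measurable G"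
  by (rule measurable_from_subalg[of G F]) (use assms in \<open>simp_all add: subalgebra_def\<close>)

locale urn =
  fixes P :: "'w measure" and A :: "nat \<Rightarrow> 'w \<Rightarrow> real"
    and m :: "nat \<Rightarrow> real" and Ms :: "nat \<Rightarrow> real"
  assumes prob: "prob_space P"
    and m_pos: "\<And>n. m n > 0"
    and Ms_def: "\<And>n. Ms n = (\<Sum>i\<le>n. m i)"
    and A_meas[measurable]: "\<And>n. A n \<in> borel_measurable P"
    and A_pos: "\<And>n x. x \<in> space P \<Longrightarrow> A n x > 0"
    and step: "\<And>n. AE x in P.
        cond_prob P (gen_alg P A {..n}) {y \<in> space P. A (Suc n) y = A n y + m (Suc n)} x
          = A n x / Ms n
      \<and> cond_prob P (gen_alg P A {..n}) {y \<in> space P. A (Suc n) y = A n y} x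
          = (Ms n - A n x) / Ms n"
begin

sublocale prob_space P by (rule prob)

definition "F n = gen_alg P A {..n}"
definition "X n x = A n x / Ms n"
definition "Xc n x = min (X n x) 1"
definition "c n = m n / Ms n"
definition "E1 n = {y \<in> space P. A (Suc n) y = A n y + m (Suc n)}"
definition "E2 n = {y \<in> space P. A (Suc n) y = A n y}"

lemma Ms_pos: "Ms n > 0"
  unfolding Ms_def using m_pos by (intro sum_pos) auto

lemma Ms_Suc: "Ms (Suc n) = Ms n + m (Suc n)"
  unfolding Ms_def by simp

lemma Ms_mono: "k \<le> n \<Longrightarrow> Ms k \<le> Ms n"
  unfolding Ms_def using m_pos by (intro sum_mono2) (auto intro: less_imp_le)

lemma c_pos: "c n > 0" unfolding c_def using m_pos Ms_pos by simp

lemma F_space[simp]: "space (F n) = space P" unfolding F_def by simp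

lemma F_sub: "sets (F n) \<subseteq> sets P" unfolding F_def by (rule gen_alg_sub) simp

lemma F_mono: "k \<le> n \<Longrightarrow> sets (F k) \<subseteq> sets (F n)"
  unfolding F_def by (rule gen_alg_mono) auto

lemma F_subalg: "sigma_finite_subalgebra P (F n)"
  unfolding F_def by (rule gen_alg_subalg[OF prob]) simp

lemma A_F: "i \<le> n \<Longrightarrow> A i \<in> borel_measurable (F n)"
  unfolding F_def by (rule gen_alg_meas) simp

lemma X_F: "i \<le> n \<Longrightarrow> X i \<in> borel_measurable (F n)"
  unfolding X_def using A_F[of i n] by (intro borel_measurable_divide) auto

lemma Xc_F: "i \<le> n \<Longrightarrow> Xc i \<in> borel_measurable (F n)"
  unfolding Xc_def using X_F[of i n] by (intro borel_measurable_min) auto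

lemma X_meas[measurable]: "X i \<in> borel_measurable P"
  unfolding X_def by measurable

lemma Xc_meas[measurable]: "Xc i \<in> borel_measurable P"
  unfolding Xc_def by measurable

lemma E1_sets[measurable]: "E1 n \<in> sets P" unfolding E1_def by measurable
lemma E2_sets[measurable]: "E2 n \<in> sets P" unfolding E2_def by measurable

lemma F_meas_P: "f \<in> borel_measurable (F n) \<Longrightarrow> f \<in> borel_measurable P"
  using F_sub by (rule meas_from_sub) auto

lemma X_pos: "x \<in> space P \<Longrightarrow> X n x > 0"
  unfolding X_def using A_pos Ms_pos by simp

lemma Xc_pos: "x \<in> space P \<Longrightarrow> Xc n x > 0"
  unfolding Xc_def using X_pos by simp

lemma Xc_le1: "Xc n x \<le> 1"
  unfolding Xc_def by simp

end

context urn begin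

lemma step_int:
  assumes f: "f \<in> borel_measurable (F n)" and bnd: "AE x in P. \<bar>f x\<bar> \<le> K"
  shows "integrable P (\<lambda>x. f x * X n x)"
    "(\<integral>x. f x * indicator (E1 n) x \<partial>P) = (\<integral>x. f x * X n x \<partial>P)"
    "integrable P (\<lambda>x. f x * (1 - X n x))"
    "(\<integral>x. f x * indicator (E2 n) x \<partial>P) = (\<integral>x. f x * (1 - X n x) \<partial>P)"
proof -
  interpret S: sigma_finite_subalgebra P "F n" by (rule F_subalg)
  have fP[measurable]: "f \<in> borel_measurable P" using f by (rule F_meas_P)
  have int1: "integrable P (\<lambda>x. f x * indicator (E1 n) x)"
  proof (rule integrable_const_bound[where B=K])
    show "AE x in P. norm (f x * indicator (E1 n) x) \<le> K"
      using bnd by eventually_elim (auto simp: indicator_def)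
  qed measurable
  have int2: "integrable P (\<lambda>x. f x * indicator (E2 n) x)"
  proof (rule integrable_const_bound[where B=K])
    show "AE x in P. norm (f x * indicator (E2 n) x) \<le> K"
      using bnd by eventually_elim (auto simp: indicator_def)
  qed measurable
  have ae: "AE x in P. real_cond_exp P (F n) (indicator (E1 n)) x = X n x
        \<and> real_cond_exp P (F n) (indicator (E2 n)) x = 1 - X n x"
    using step[of n]
  proof eventually_elim
    case (elim x)
    have "(Ms n - A n x) / Ms n = 1 - X n x"
      using Ms_pos[of n] by (simp add: X_def diff_divide_distrib)
    with elim show ?case unfolding cond_prob_def E1_def E2_def F_def X_def by simp
  qed
  have r1: "integrable P (\<lambda>x. f x * real_cond_exp P (F n) (indicator (E1 n)) x)"
    "(\<integral>x. f x * real_cond_exp P (F n) (indicator (E1 n)) x \<partial>P) = (\<integral>x. f x * indicator (E1 n) x \<partial>P)"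
    by (rule S.real_cond_exp_intg[OF int1 f]; simp)+
  have r2: "integrable P (\<lambda>x. f x * real_cond_exp P (F n) (indicator (E2 n)) x)"
    "(\<integral>x. f x * real_cond_exp P (F n) (indicator (E2 n)) x \<partial>P) = (\<integral>x. f x * indicator (E2 n) x \<partial>P)"
    by (rule S.real_cond_exp_intg[OF int2 f]; simp)+
  have c1: "AE x in P. f x * real_cond_exp P (F n) (indicator (E1 n)) x = f x * X n x"
    using ae by eventually_elim simp
  have c2: "AE x in P. f x * real_cond_exp P (F n) (indicator (E2 n)) x = f x * (1 - X n x)"
    using ae by eventually_elim simp
  show "integrable P (\<lambda>x. f x * X n x)"
    by (rule integrable_cong_AE_imp[OF r1(1) _ c1]) measurable
  show "integrable P (\<lambda>x. f x * (1 - X n x))"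
    by (rule integrable_cong_AE_imp[OF r2(1) _ c2]) measurable
  show "(\<integral>x. f x * indicator (E1 n) x \<partial>P) = (\<integral>x. f x * X n x \<partial>P)"
    using r1(2) integral_cong_AE[OF _ _ c1] by simp
  show "(\<integral>x. f x * indicator (E2 n) x \<partial>P) = (\<integral>x. f x * (1 - X n x) \<partial>P)"
    using r2(2) integral_cong_AE[OF _ _ c2] by simp
qed

end

context urn begin

lemma E_disj: "E1 n \<inter> E2 n = {}"
  unfolding E1_def E2_def using m_pos[of "Suc n"] by auto

lemma space_F[measurable]: "space P \<in> sets (F n)"
  using sets.top[of "F n"] by simp

lemma const_F: "(\<lambda>x. k) \<in> borel_measurable (F n)" by simp

lemma two_vals: "AE x in P. x \<in> E1 n \<union> E2 n"
proof -
  have b: "AE x in P. \<bar>(\<lambda>x. 1::real) x\<bar> \<le> 1" by simp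
  note s = step_int[OF const_F b]
  have i1: "integrable P (X n)" using s(1) by simp
  have m1: "measure P (E1 n) = (\<integral>x. X n x \<partial>P)" using s(2) by simp
  have m2: "measure P (E2 n) = (\<integral>x. 1 - X n x \<partial>P)" using s(4) by simp
  have "(\<integral>x. 1 - X n x \<partial>P) = 1 - (\<integral>x. X n x \<partial>P)"
    using i1 by (simp add: prob_space)
  hence "measure P (E1 n \<union> E2 n) = 1"
    using m1 m2 E_disj[of n] by (subst finite_measure_Union) auto
  thus ?thesis by (subst AE_in_set_eq_1) auto
qed

lemma X_le1: "AE x in P. X n x \<le> 1"
proof -
  define G where "G = {x \<in> space P. X n x > 1}"
  have GF: "G \<in> sets (F n)" unfolding G_def using X_F[of n n] by measurable
  hence GP[measurable]: "G \<in> sets P" using F_sub by auto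
  have fF: "indicator G \<in> borel_measurable (F n)" using GF by measurable
  have b: "AE x in P. \<bar>indicator G x :: real\<bar> \<le> 1" by (simp add: indicator_def)
  note s = step_int[OF fF b]
  have "0 \<le> (\<integral>x. indicator G x * indicator (E2 n) x \<partial>P :: real)"
    by (rule integral_nonneg_AE) (auto simp: indicator_def)
  hence nn: "0 \<le> (\<integral>x. indicator G x * (1 - X n x) \<partial>P)" using s(4) by simp
  define h where "h x = - (indicator G x * (1 - X n x))" for x
  have hi: "integrable P h" unfolding h_def using s(3) by simp
  have hn: "AE x in P. 0 \<le> h x" unfolding h_def G_def by (auto simp: indicator_def)
  have "(\<integral>x. h x \<partial>P) = 0"
  proof -
    have "(\<integral>x. h x \<partial>P) = - (\<integral>x. indicator G x * (1 - X n x) \<partial>P)" unfolding h_def by simp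
    moreover have "0 \<le> (\<integral>x. h x \<partial>P)" using hn by (rule integral_nonneg_AE)
    ultimately show ?thesis using nn by linarith
  qed
  hence "AE x in P. h x = 0" using integral_nonneg_eq_0_iff_AE[OF hi hn] by simp
  with AE_space show ?thesis
  proof eventually_elim
    case (elim x)
    show ?case
    proof (rule ccontr)
      assume "\<not> X n x \<le> 1"
      hence "x \<in> G" "h x = X n x - 1" using elim unfolding G_def h_def by auto
      thus False using elim \<open>\<not> X n x \<le> 1\<close> by simp
    qed
  qed
qed

end

context urn begin

lemma trans1: "x \<in> E1 n \<Longrightarrow> X (Suc n) x - X n x = c (Suc n) * (1 - X n x)"
  unfolding E1_def X_def c_def using Ms_pos[of n] Ms_pos[of "Suc n"] Ms_Suc[of n]
  by (auto simp: field_simps)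

lemma trans2: "x \<in> E2 n \<Longrightarrow> X (Suc n) x - X n x = - (c (Suc n) * X n x)"
  unfolding E2_def X_def c_def using Ms_pos[of n] Ms_pos[of "Suc n"] Ms_Suc[of n]
  by (auto simp: field_simps)

lemma good: "AE x in P. \<forall>n. Xc n x = X n x"
proof -
  have "AE x in P. \<forall>n. X n x \<le> 1" by (subst AE_all_countable) (simp add: X_le1)
  thus ?thesis by eventually_elim (simp add: Xc_def)
qed

definition "Sq a n x = (\<Sum>k\<in>{a<..n}. (c k)\<^sup>2 * Xc (k - 1) x)"
definition "W a l mu n x = exp (l * (Xc n x - Xc a x) - l\<^sup>2 * Sq a n x - mu * Xc a x)"

lemma Sq_F: "Sq a n \<in> borel_measurable (F n)"
  unfolding Sq_def
proof (rule borel_measurable_sum)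
  fix k assume "k \<in> {a<..n}"
  hence "k - 1 \<le> n" by auto
  thus "(\<lambda>x. (c k)\<^sup>2 * Xc (k - 1) x) \<in> borel_measurable (F n)"
    using Xc_F by (intro borel_measurable_times) auto
qed

lemma W_F: "a \<le> n \<Longrightarrow> W a l mu n \<in> borel_measurable (F n)"
  unfolding W_def using Xc_F[of n n] Xc_F[of a n] Sq_F[of a n] by measurable

lemma W_meas[measurable]: "a \<le> n \<Longrightarrow> W a l mu n \<in> borel_measurable P"
  using W_F by (rule F_meas_P)

lemma Sq_nonneg: "x \<in> space P \<Longrightarrow> 0 \<le> Sq a n x"
  unfolding Sq_def using Xc_pos by (intro sum_nonneg) (simp add: less_imp_le)

lemma W_pos: "W a l mu n x > 0" unfolding W_def by simp

lemma W_bound: assumes "x \<in> space P" shows "W a l mu n x \<le> exp (\<bar>l\<bar> + \<bar>mu\<bar>)"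
proof -
  have x1: "0 < Xc n x" "Xc n x \<le> 1" "0 < Xc a x" "Xc a x \<le> 1" using Xc_pos[OF assms] Xc_le1 by auto
  have "l * (Xc n x - Xc a x) \<le> \<bar>l\<bar> * \<bar>Xc n x - Xc a x\<bar>" by (metis abs_ge_self abs_mult)
  also have "\<dots> \<le> \<bar>l\<bar>" using x1 by (intro mult_left_le) auto
  finally have 1: "l * (Xc n x - Xc a x) \<le> \<bar>l\<bar>" .
  have 2: "0 \<le> l\<^sup>2 * Sq a n x" using Sq_nonneg[OF assms] by simp
  have "- (mu * Xc a x) \<le> \<bar>mu\<bar> * Xc a x" using x1 by (metis abs_ge_minus_self abs_mult abs_of_pos minus_mult_left)
  also have "\<dots> \<le> \<bar>mu\<bar>" using x1 by (intro mult_left_le) auto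
  finally have 3: "- (mu * Xc a x) \<le> \<bar>mu\<bar>" .
  show ?thesis unfolding W_def using 1 2 3 by simp
qed

lemma W_Suc:
  assumes "a \<le> n"
  shows "W a l mu (Suc n) x = W a l mu n x * exp (l * (Xc (Suc n) x - Xc n x) - l\<^sup>2 * (c (Suc n))\<^sup>2 * Xc n x)"
proof -
  have "{a<..Suc n} = insert (Suc n) {a<..n}" using assms by auto
  hence "Sq a (Suc n) x = (c (Suc n))\<^sup>2 * Xc n x + Sq a n x" unfolding Sq_def by simp
  thus ?thesis unfolding W_def by (simp add: exp_add[symmetric] algebra_simps)
qed

lemma W_a: "W a l mu a x = exp (- (mu * Xc a x))"
  unfolding W_def Sq_def by simp

end

context urn begin

lemma W_int:
  assumes "a \<le> n" "G \<in> sets P"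
  shows "integrable P (\<lambda>x. indicator G x * W a l mu n x)"
proof (rule integrable_const_bound[where B="exp (\<bar>l\<bar> + \<bar>mu\<bar>)"])
  show "AE x in P. norm (indicator G x * W a l mu n x) \<le> exp (\<bar>l\<bar> + \<bar>mu\<bar>)"
    using AE_space
  proof eventually_elim
    case (elim x)
    show ?case using W_bound[OF elim, of a l mu n] W_pos[of a l mu n x]
      by (auto simp: indicator_def)
  qed
qed (use assms in measurable)

lemma supermart:
  assumes an: "a \<le> n" and GF: "G \<in> sets (F n)" and lc: "\<bar>l\<bar> * c (Suc n) \<le> 1"
  shows "(\<integral>x. indicator G x * W a l mu (Suc n) x \<partial>P) \<le> (\<integral>x. indicator G x * W a l mu n x \<partial>P)"
proof -
  define q where "q = c (Suc n)"
  have q0: "0 \<le> q" using c_pos unfolding q_def by (simp add: less_imp_le)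
  have lq: "\<bar>l * q\<bar> \<le> 1" using lc q0 unfolding q_def by (simp add: abs_mult)
  have GP[measurable]: "G \<in> sets P" using GF F_sub by auto
  define K where "K = exp (\<bar>l\<bar> + \<bar>mu\<bar>) * exp 1"
  define f1 where "f1 x = indicator G x * W a l mu n x * exp (l * q * (1 - Xc n x) - l\<^sup>2 * q\<^sup>2 * Xc n x)" for x
  define f2 where "f2 x = indicator G x * W a l mu n x * exp (- (l * q * Xc n x) - l\<^sup>2 * q\<^sup>2 * Xc n x)" for x
  have WF: "W a l mu n \<in> borel_measurable (F n)" using W_F[OF an] .
  have XF: "Xc n \<in> borel_measurable (F n)" using Xc_F[of n n] by simp
  have f1F: "f1 \<in> borel_measurable (F n)" unfolding f1_def using WF XF GF by measurable
  have f2F: "f2 \<in> borel_measurable (F n)" unfolding f2_def using WF XF GF by measurable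
  have ebound: "\<And>x y. x \<in> space P \<Longrightarrow> y \<le> 1 \<Longrightarrow> \<bar>indicator G x * W a l mu n x * exp y\<bar> \<le> K"
  proof -
    fix x y assume x: "x \<in> space P" and y: "(y::real) \<le> 1"
    have "\<bar>indicator G x * W a l mu n x * exp y\<bar> \<le> W a l mu n x * exp y"
      using W_pos[of a l mu n x] by (auto simp: indicator_def)
    also have "\<dots> \<le> exp (\<bar>l\<bar> + \<bar>mu\<bar>) * exp 1"
      using W_bound[OF x] y by (intro mult_mono) auto
    finally show "\<bar>indicator G x * W a l mu n x * exp y\<bar> \<le> K" unfolding K_def .
  qed
  have b1: "AE x in P. \<bar>f1 x\<bar> \<le> K"
    using AE_space
  proof eventually_elim
    case (elim x)
    have "l * q * (1 - Xc n x) \<le> \<bar>l * q\<bar> * \<bar>1 - Xc n x\<bar>" by (metis abs_ge_self abs_mult)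
    also have "\<dots> \<le> 1" using Xc_pos[OF elim, of n] Xc_le1[of n x] lq
      by (intro mult_le_one) auto
    finally have "l * q * (1 - Xc n x) - l\<^sup>2 * q\<^sup>2 * Xc n x \<le> 1"
      using Xc_pos[OF elim, of n] by (smt (verit) mult_nonneg_nonneg zero_le_power2)
    thus ?case unfolding f1_def using ebound[OF elim] by blast
  qed
  have b2: "AE x in P. \<bar>f2 x\<bar> \<le> K"
    using AE_space
  proof eventually_elim
    case (elim x)
    have "- (l * q * Xc n x) \<le> \<bar>l * q\<bar> * \<bar>Xc n x\<bar>" by (metis abs_ge_minus_self abs_mult)
    also have "\<dots> \<le> 1" using Xc_pos[OF elim, of n] Xc_le1[of n x] lq
      by (intro mult_le_one) auto
    finally have "- (l * q * Xc n x) - l\<^sup>2 * q\<^sup>2 * Xc n x \<le> 1"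
      using Xc_pos[OF elim, of n] by (smt (verit) mult_nonneg_nonneg zero_le_power2)
    thus ?case unfolding f2_def using ebound[OF elim] by blast
  qed
  note s1 = step_int[OF f1F b1]
  note s2 = step_int[OF f2F b2]
  have ae_eq: "AE x in P. indicator G x * W a l mu (Suc n) x = f1 x * indicator (E1 n) x + f2 x * indicator (E2 n) x"
    using two_vals[of n] good AE_space
  proof eventually_elim
    case (elim x)
    have xc: "Xc n x = X n x" "Xc (Suc n) x = X (Suc n) x" using elim by auto
    show ?case
    proof (cases "x \<in> E1 n")
      case True
      hence "x \<notin> E2 n" using E_disj by auto
      have "Xc (Suc n) x - Xc n x = q * (1 - Xc n x)" using trans1[OF True] xc q_def by simp
      hence "l * (Xc (Suc n) x - Xc n x) - l\<^sup>2 * (c (Suc n))\<^sup>2 * Xc n x = l * q * (1 - Xc n x) - l\<^sup>2 * q\<^sup>2 * Xc n x"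
        unfolding q_def by simp
      thus ?thesis using True \<open>x \<notin> E2 n\<close> unfolding f1_def W_Suc[OF an] by simp
    next
      case False
      hence "x \<in> E2 n" using elim by auto
      have "Xc (Suc n) x - Xc n x = - (q * Xc n x)" using trans2[OF \<open>x \<in> E2 n\<close>] xc q_def by simp
      hence "l * (Xc (Suc n) x - Xc n x) - l\<^sup>2 * (c (Suc n))\<^sup>2 * Xc n x = - (l * q * Xc n x) - l\<^sup>2 * q\<^sup>2 * Xc n x"
        unfolding q_def by simp
      thus ?thesis using False \<open>x \<in> E2 n\<close> unfolding f2_def W_Suc[OF an] by simp
    qed
  qed
  have f1P[measurable]: "f1 \<in> borel_measurable P" using f1F by (rule F_meas_P)
  have f2P[measurable]: "f2 \<in> borel_measurable P" using f2F by (rule F_meas_P)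
  have i1: "integrable P (\<lambda>x. f1 x * indicator (E1 n) x)"
  proof (rule integrable_const_bound[where B=K])
    show "AE x in P. norm (f1 x * indicator (E1 n) x) \<le> K"
      using b1 by eventually_elim (auto simp: indicator_def)
  qed measurable
  have i2: "integrable P (\<lambda>x. f2 x * indicator (E2 n) x)"
  proof (rule integrable_const_bound[where B=K])
    show "AE x in P. norm (f2 x * indicator (E2 n) x) \<le> K"
      using b2 by eventually_elim (auto simp: indicator_def)
  qed measurable
  have "(\<integral>x. indicator G x * W a l mu (Suc n) x \<partial>P) = (\<integral>x. f1 x * indicator (E1 n) x + f2 x * indicator (E2 n) x \<partial>P)"
  proof (rule integral_cong_AE[OF _ _ ae_eq])
    have "a \<le> Suc n" using an by simp
    thus "(\<lambda>x. indicator G x * W a l mu (Suc n) x) \<in> borel_measurable P" by measurable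
  qed measurable
  also have "\<dots> = (\<integral>x. f1 x * indicator (E1 n) x \<partial>P) + (\<integral>x. f2 x * indicator (E2 n) x \<partial>P)"
    using i1 i2 by simp
  also have "\<dots> = (\<integral>x. f1 x * X n x \<partial>P) + (\<integral>x. f2 x * (1 - X n x) \<partial>P)"
    using s1(2) s2(4) by simp
  also have "\<dots> = (\<integral>x. f1 x * X n x + f2 x * (1 - X n x) \<partial>P)"
    using s1(1) s2(3) by simp
  also have "\<dots> \<le> (\<integral>x. indicator G x * W a l mu n x \<partial>P)"
  proof (rule integral_mono_AE)
    show "integrable P (\<lambda>x. f1 x * X n x + f2 x * (1 - X n x))" using s1(1) s2(3) by simp
    show "integrable P (\<lambda>x. indicator G x * W a l mu n x)" using W_int[OF an GP] .
    show "AE x in P. f1 x * X n x + f2 x * (1 - X n x) \<le> indicator G x * W a l mu n x"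
      using good AE_space
    proof eventually_elim
      case (elim x)
      have xc: "Xc n x = X n x" using elim by auto
      define y where "y = X n x"
      have y: "0 < y" "y \<le> 1" using Xc_pos[OF elim(2), of n] Xc_le1[of n x] xc y_def by auto
      have tp: "y * exp (l * q * (1 - y)) + (1 - y) * exp (- (l * q * y)) \<le> exp (l\<^sup>2 * q\<^sup>2 * y)"
        using two_point[OF y q0] lc q_def by simp
      have "f1 x * X n x + f2 x * (1 - X n x) = indicator G x * W a l mu n x * exp (- (l\<^sup>2 * q\<^sup>2 * y)) *
          (y * exp (l * q * (1 - y)) + (1 - y) * exp (- (l * q * y)))"
        unfolding f1_def f2_def xc y_def[symmetric] by (simp add: exp_diff exp_minus exp_add field_simps)
      also have "\<dots> \<le> indicator G x * W a l mu n x * exp (- (l\<^sup>2 * q\<^sup>2 * y)) * exp (l\<^sup>2 * q\<^sup>2 * y)"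
        using tp W_pos[of a l mu n x] by (intro mult_left_mono) (auto simp: indicator_def)
      also have "\<dots> = indicator G x * W a l mu n x" by (simp add: exp_minus)
      finally show ?case .
    qed
  qed
  finally show ?thesis .
qed

end

context urn begin

definition "H a l mu k = (\<Union>i\<in>{a..k}. {x \<in> space P. 1 \<le> W a l mu i x})"

lemma W_Fk: "a \<le> i \<Longrightarrow> i \<le> k \<Longrightarrow> W a l mu i \<in> borel_measurable (F k)"
  by (rule meas_mono_sets[of "F i"]) (simp_all add: F_mono W_F)

lemma H_F: "H a l mu k \<in> sets (F k)"
  unfolding H_def
proof (rule sets.finite_UN)
  fix i assume "i \<in> {a..k}"
  hence "W a l mu i \<in> borel_measurable (F k)" using W_Fk by auto
  hence "{x \<in> space (F k). 1 \<le> W a l mu i x} \<in> sets (F k)" by measurable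
  thus "{x \<in> space P. 1 \<le> W a l mu i x} \<in> sets (F k)" by simp
qed simp

lemma H_P[measurable]: "H a l mu k \<in> sets P" using H_F[of a l mu k] F_sub[of k] by blast

lemma meas_le_W:
  assumes "S \<in> sets P" "S \<subseteq> {x \<in> space P. 1 \<le> W a l mu i x}" "a \<le> i"
  shows "measure P S \<le> (\<integral>x. indicator S x * W a l mu i x \<partial>P)"
proof -
  have "measure P S = (\<integral>x. indicator S x \<partial>P)" using assms by simp
  also have "\<dots> \<le> (\<integral>x. indicator S x * W a l mu i x \<partial>P)"
  proof (rule integral_mono)
    show "integrable P (indicator S :: _ \<Rightarrow> real)" using assms(1) by (rule integrable_real_indicator) (simp add: less_top[symmetric])
    show "integrable P (\<lambda>x. indicator S x * W a l mu i x)" by (rule W_int) (use assms in simp_all)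
    show "indicator S x \<le> indicator S x * W a l mu i x" if "x \<in> space P" for x
    proof (cases "x \<in> S")
      case True
      hence "1 \<le> W a l mu i x" using assms(2) by blast
      thus ?thesis using True by simp
    qed simp
  qed
  finally show ?thesis .
qed

lemma maximal_fin:
  assumes BF: "B \<in> sets (F a)" and lc: "\<And>n. a \<le> n \<Longrightarrow> \<bar>l\<bar> * c (Suc n) \<le> 1"
  shows "measure P (B \<inter> H a l mu (a + j)) + (\<integral>x. indicator (B - H a l mu (a + j)) x * W a l mu (a + j) x \<partial>P)
     \<le> (\<integral>x. indicator B x * W a l mu a x \<partial>P)"
proof (induction j)
  have BP: "B \<in> sets P" using BF F_sub by auto
  case 0
  let ?H = "H a l mu a"
  have HH: "?H = {x \<in> space P. 1 \<le> W a l mu a x}" unfolding H_def by simp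
  have m: "measure P (B \<inter> ?H) \<le> (\<integral>x. indicator (B \<inter> ?H) x * W a l mu a x \<partial>P)"
    by (rule meas_le_W) (use BP HH in auto)
  have "(\<integral>x. indicator (B \<inter> ?H) x * W a l mu a x \<partial>P) + (\<integral>x. indicator (B - ?H) x * W a l mu a x \<partial>P)
      = (\<integral>x. indicator (B \<inter> ?H) x * W a l mu a x + indicator (B - ?H) x * W a l mu a x \<partial>P)"
  proof -
    have i1: "integrable P (\<lambda>x. indicator (B \<inter> ?H) x * W a l mu a x)" by (rule W_int) (use BP in auto)
    have i2: "integrable P (\<lambda>x. indicator (B - ?H) x * W a l mu a x)" by (rule W_int) (use BP in auto)
    show ?thesis using Bochner_Integration.integral_add[OF i1 i2] by simp
  qed
  also have "\<dots> = (\<integral>x. indicator B x * W a l mu a x \<partial>P)"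
    by (rule Bochner_Integration.integral_cong) (auto simp: indicator_def)
  finally show ?case using m by simp
next
  have BP: "B \<in> sets P" using BF F_sub by auto
  case (Suc j)
  define k where "k = a + j"
  have ak: "a \<le> k" unfolding k_def by simp
  define G where "G = B - H a l mu k"
  have GF: "G \<in> sets (F k)" unfolding G_def using F_mono[OF ak] BF H_F by auto
  have GP: "G \<in> sets P" using GF F_sub by auto
  define T where "T = G \<inter> {x \<in> space P. 1 \<le> W a l mu (Suc k) x}"
  have aSk: "a \<le> Suc k" using ak by simp
  have TP: "T \<in> sets P" unfolding T_def using GP aSk by measurable
  have HS: "H a l mu (Suc k) = H a l mu k \<union> {x \<in> space P. 1 \<le> W a l mu (Suc k) x}"
    unfolding H_def using ak by (auto simp: atLeastAtMostSuc_conv)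
  have split1: "B \<inter> H a l mu (Suc k) = (B \<inter> H a l mu k) \<union> T" unfolding T_def G_def HS by auto
  have disj: "(B \<inter> H a l mu k) \<inter> T = {}" unfolding T_def G_def by auto
  have meq: "measure P (B \<inter> H a l mu (Suc k)) = measure P (B \<inter> H a l mu k) + measure P T"
    unfolding split1 using disj BP TP by (intro finite_measure_Union) auto
  have mT: "measure P T \<le> (\<integral>x. indicator T x * W a l mu (Suc k) x \<partial>P)"
    by (rule meas_le_W[OF TP _ aSk]) (auto simp: T_def)
  have ieq: "(\<integral>x. indicator G x * W a l mu (Suc k) x \<partial>P)
      = (\<integral>x. indicator (B - H a l mu (Suc k)) x * W a l mu (Suc k) x \<partial>P) + (\<integral>x. indicator T x * W a l mu (Suc k) x \<partial>P)"
  proof -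
    have "(\<integral>x. indicator G x * W a l mu (Suc k) x \<partial>P)
       = (\<integral>x. indicator (B - H a l mu (Suc k)) x * W a l mu (Suc k) x + indicator T x * W a l mu (Suc k) x \<partial>P)"
      by (rule Bochner_Integration.integral_cong) (auto simp: indicator_def G_def T_def HS)
    also have "\<dots> = (\<integral>x. indicator (B - H a l mu (Suc k)) x * W a l mu (Suc k) x \<partial>P) + (\<integral>x. indicator T x * W a l mu (Suc k) x \<partial>P)"
    proof -
      have "a \<le> Suc k" using aSk .
      have i1: "integrable P (\<lambda>x. indicator (B - H a l mu (Suc k)) x * W a l mu (Suc k) x)" by (rule W_int) (use BP aSk in auto)
      have i2: "integrable P (\<lambda>x. indicator T x * W a l mu (Suc k) x)" by (rule W_int) (use TP aSk in auto)
      show ?thesis using Bochner_Integration.integral_add[OF i1 i2] by simp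
    qed
    finally show ?thesis .
  qed
  have sm: "(\<integral>x. indicator G x * W a l mu (Suc k) x \<partial>P) \<le> (\<integral>x. indicator G x * W a l mu k x \<partial>P)"
    by (rule supermart[OF ak GF lc[OF ak]])
  have "measure P (B \<inter> H a l mu (Suc k)) + (\<integral>x. indicator (B - H a l mu (Suc k)) x * W a l mu (Suc k) x \<partial>P)
      \<le> measure P (B \<inter> H a l mu k) + (\<integral>x. indicator G x * W a l mu k x \<partial>P)"
    using meq mT ieq sm by linarith
  also have "\<dots> \<le> (\<integral>x. indicator B x * W a l mu a x \<partial>P)" using Suc.IH unfolding G_def k_def .
  finally show ?case unfolding k_def by simp
qed

lemma maximal:
  assumes BF: "B \<in> sets (F a)" and lc: "\<And>n. a \<le> n \<Longrightarrow> \<bar>l\<bar> * c (Suc n) \<le> 1"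
  shows "measure P (B \<inter> (\<Union>j. H a l mu (a + j))) \<le> (\<integral>x. indicator B x * W a l mu a x \<partial>P)"
proof -
  have BP: "B \<in> sets P" using BF F_sub by auto
  have lim: "(\<lambda>j. measure P (B \<inter> H a l mu (a + j))) \<longlonglongrightarrow> measure P (\<Union>j. B \<inter> H a l mu (a + j))"
  proof (rule finite_Lim_measure_incseq)
    show "range (\<lambda>j. B \<inter> H a l mu (a + j)) \<subseteq> sets P" using BP by auto
    show "incseq (\<lambda>j. B \<inter> H a l mu (a + j))"
    proof (rule incseq_SucI)
      fix n show "B \<inter> H a l mu (a + n) \<subseteq> B \<inter> H a l mu (a + Suc n)"
        unfolding H_def by (intro Int_mono order_refl UN_mono) auto
    qed
  qed
  have le: "measure P (B \<inter> H a l mu (a + j)) \<le> (\<integral>x. indicator B x * W a l mu a x \<partial>P)" for j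
  proof -
    have "0 \<le> (\<integral>x. indicator (B - H a l mu (a + j)) x * W a l mu (a + j) x \<partial>P)"
      by (rule integral_nonneg_AE, rule AE_I2) (simp add: indicator_def less_imp_le[OF W_pos])
    thus ?thesis using maximal_fin[where j=j and mu=mu and l=l, OF BF lc] by linarith
  qed
  have "measure P (\<Union>j. B \<inter> H a l mu (a + j)) \<le> (\<integral>x. indicator B x * W a l mu a x \<partial>P)"
    using lim le by (intro LIMSEQ_le_const2) auto
  thus ?thesis by simp
qed

end

context urn begin

lemma event_bound:
  fixes a :: nat and t S' b' :: real
  assumes t0: "0 \<le> t"
    and hS: "\<And>n. (\<Sum>k\<in>{a<..n}. (c k)\<^sup>2) \<le> S'"
    and hb: "\<And>k. a < k \<Longrightarrow> c k \<le> b'"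
    and hD: "0 < S' + t * max S' b'"
    and BF: "B \<in> sets (F a)"
  shows "measure P (B \<inter> {y \<in> space P. \<exists>i\<ge>a. \<bar>X i y - X a y\<bar> > t * X a y})
     \<le> (\<integral>x. indicator B x * (2 * exp (- ((t\<^sup>2 / 4) * X a x / (S' + t * max S' b')))) \<partial>P)"
proof -
  define D where "D = S' + t * max S' b'"
  have D0: "0 < D" using hD D_def by simp
  define l where "l = t / (2 * D)"
  define mu where "mu = l * t - l\<^sup>2 * (1 + t) * S'"
  have S0: "0 \<le> S'" using hS[of a] by simp
  have l0: "0 \<le> l" using t0 D0 unfolding l_def by simp
  have BP: "B \<in> sets P" using BF F_sub by auto
  have lc: "\<bar>l\<bar> * c (Suc n) \<le> 1" if "a \<le> n" for n
  proof -
    have cb: "c (Suc n) \<le> b'" using hb that by simp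
    have cp: "0 \<le> c (Suc n)" using c_pos by (simp add: less_imp_le)
    have "l * c (Suc n) \<le> l * b'" using cb l0 by (simp add: mult_left_mono)
    also have "\<dots> \<le> 1"
    proof (cases "t = 0")
      case True thus ?thesis unfolding l_def by simp
    next
      case False
      hence tp: "0 < t" using t0 by simp
      have "t * b' \<le> t * max S' b'" using tp by (intro mult_left_mono) auto
      hence tb: "t * b' \<le> D" unfolding D_def using S0 by linarith
      have "l * b' = (t * b') / (2 * D)" unfolding l_def by simp
      also have "\<dots> \<le> D / (2 * D)" using tb D0 by (intro divide_right_mono) auto
      also have "\<dots> \<le> 1" using D0 by simp
      finally show ?thesis .
    qed
    finally show ?thesis using l0 by simp
  qed
  have lc': "\<bar>- l\<bar> * c (Suc n) \<le> 1" if "a \<le> n" for n using lc[OF that] by simp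
  have mu_ge: "t\<^sup>2 / (4 * D) \<le> mu"
  proof -
    have "t * S' \<le> t * max S' b'" using t0 by (intro mult_left_mono) auto
    hence h1: "(1 + t) * S' \<le> D" unfolding D_def by (simp add: algebra_simps)
    have "l\<^sup>2 * (1 + t) * S' = t\<^sup>2 / (4 * D\<^sup>2) * ((1 + t) * S')"
      unfolding l_def by (simp add: power2_eq_square field_simps)
    also have "\<dots> \<le> t\<^sup>2 / (4 * D\<^sup>2) * D" using h1 D0 by (intro mult_left_mono) auto
    also have "\<dots> = t\<^sup>2 / (4 * D)" using D0 by (simp add: power2_eq_square field_simps)
    finally have "l\<^sup>2 * (1 + t) * S' \<le> t\<^sup>2 / (4 * D)" .
    moreover have "l * t = t\<^sup>2 / (2 * D)" unfolding l_def by (simp add: power2_eq_square)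
    ultimately show ?thesis unfolding mu_def using D0 by (simp add: field_simps)
  qed
  define Ev where "Ev = {y \<in> space P. \<exists>i\<ge>a. \<bar>X i y - X a y\<bar> > t * X a y}"
  define U1 where "U1 = (\<Union>j. H a l mu (a + j))"
  define U2 where "U2 = (\<Union>j. H a (- l) mu (a + j))"
  have incl: "y \<in> U1 \<union> U2" if y: "y \<in> Ev" "\<forall>n. Xc n y = X n y" for y
  proof -
    have ys: "y \<in> space P" using y Ev_def by auto
    let ?Q = "\<lambda>i. a \<le> i \<and> \<bar>X i y - X a y\<bar> > t * X a y"
    have ex: "\<exists>i. ?Q i" using y Ev_def by auto
    define i where "i = (LEAST i. ?Q i)"
    have Qi: "?Q i" unfolding i_def using LeastI_ex[OF ex] .
    have below: "\<not> ?Q j" if "j < i" for j using not_less_Least[OF that[unfolded i_def]] i_def by simp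
    have Xa: "0 < X a y" using X_pos[OF ys] .
    have bnd: "X j y \<le> (1 + t) * X a y" if "a \<le> j" "j < i" for j
    proof -
      have "\<bar>X j y - X a y\<bar> \<le> t * X a y" using below[OF that(2)] that(1) by simp
      hence "X j y - X a y \<le> t * X a y" by (simp add: abs_le_iff)
      thus ?thesis by (simp add: algebra_simps)
    qed
    have Sqb: "Sq a i y \<le> (1 + t) * X a y * S'"
    proof -
      have "Sq a i y \<le> (\<Sum>k\<in>{a<..i}. (c k)\<^sup>2 * ((1 + t) * X a y))"
        unfolding Sq_def
      proof (rule sum_mono)
        fix k assume k: "k \<in> {a<..i}"
        hence "a \<le> k - 1" "k - 1 < i" by auto
        hence "Xc (k - 1) y \<le> (1 + t) * X a y" using bnd y(2) by simp
        thus "(c k)\<^sup>2 * Xc (k - 1) y \<le> (c k)\<^sup>2 * ((1 + t) * X a y)" by (simp add: mult_left_mono)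
      qed
      also have "\<dots> = (1 + t) * X a y * (\<Sum>k\<in>{a<..i}. (c k)\<^sup>2)"
        using sum_distrib_right[of "\<lambda>k. (c k)\<^sup>2" "{a<..i}" "(1 + t) * X a y", symmetric] by (simp add: mult.commute)
      also have "\<dots> \<le> (1 + t) * X a y * S'"
        using hS[of i] t0 Xa by (intro mult_left_mono) auto
      finally show ?thesis .
    qed
    have l2: "l\<^sup>2 * Sq a i y \<le> l\<^sup>2 * ((1 + t) * X a y * S')" using Sqb by (simp add: mult_left_mono)
    have zero: "l * (t * X a y) - l\<^sup>2 * ((1 + t) * X a y * S') - mu * X a y = 0"
      unfolding mu_def by (simp add: algebra_simps)
    have ia: "i = a + (i - a)" using Qi by simp
    have xa: "Xc a y = X a y" "Xc i y = X i y" using y(2) by auto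
    show ?thesis
    proof (cases "X i y - X a y > t * X a y")
      case True
      have "l * (t * X a y) \<le> l * (X i y - X a y)" using True l0 by (simp add: mult_left_mono)
      hence "0 \<le> l * (Xc i y - Xc a y) - l\<^sup>2 * Sq a i y - mu * Xc a y" unfolding xa using zero l2 by linarith
      hence "1 \<le> W a l mu i y" unfolding W_def by simp
      hence "y \<in> H a l mu (a + (i - a))" unfolding H_def using ys ia by auto
      thus ?thesis unfolding U1_def by blast
    next
      case False
      hence dn: "X a y - X i y > t * X a y" using Qi by (simp add: abs_if split: if_splits)
      have "l * (t * X a y) \<le> l * (X a y - X i y)" using dn l0 by (simp add: mult_left_mono)
      hence "0 \<le> (- l) * (Xc i y - Xc a y) - (- l)\<^sup>2 * Sq a i y - mu * Xc a y" unfolding xa using zero l2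
        by (simp add: algebra_simps)
      hence "1 \<le> W a (- l) mu i y" unfolding W_def by simp
      hence "y \<in> H a (- l) mu (a + (i - a))" unfolding H_def using ys ia by auto
      thus ?thesis unfolding U2_def by blast
    qed
  qed
  obtain N where N: "{x \<in> space P. \<not> (\<forall>n. Xc n x = X n x)} \<subseteq> N" "emeasure P N = 0" "N \<in> sets P"
    using good by (elim AE_E) blast
  have Nnull: "N \<in> null_sets P" using N by auto
  have EvP: "Ev \<in> sets P" unfolding Ev_def by measurable
  have U1P: "U1 \<in> sets P" unfolding U1_def by (intro sets.countable_UN) auto
  have U2P: "U2 \<in> sets P" unfolding U2_def by (intro sets.countable_UN) auto
  have sub: "B \<inter> Ev \<subseteq> ((B \<inter> U1) \<union> (B \<inter> U2)) \<union> N"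
  proof
    fix y assume y: "y \<in> B \<inter> Ev"
    show "y \<in> ((B \<inter> U1) \<union> (B \<inter> U2)) \<union> N"
    proof (cases "\<forall>n. Xc n y = X n y")
      case True thus ?thesis using incl[of y] y by blast
    next
      case False thus ?thesis using N(1) y Ev_def by blast
    qed
  qed
  have "measure P (B \<inter> Ev) \<le> measure P (((B \<inter> U1) \<union> (B \<inter> U2)) \<union> N)"
    using sub BP U1P U2P N(3) by (intro finite_measure_mono) auto
  also have "\<dots> = measure P ((B \<inter> U1) \<union> (B \<inter> U2))"
    using BP U1P U2P Nnull by (intro measure_Un_null_set) auto
  also have "\<dots> \<le> measure P (B \<inter> U1) + measure P (B \<inter> U2)"
    using BP U1P U2P by (intro measure_Un_le) auto
  also have "\<dots> \<le> (\<integral>x. indicator B x * W a l mu a x \<partial>P) + (\<integral>x. indicator B x * W a (- l) mu a x \<partial>P)"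
    unfolding U1_def U2_def by (intro add_mono maximal[OF BF] lc lc')
  also have "\<dots> = 2 * (\<integral>x. indicator B x * exp (- (mu * Xc a x)) \<partial>P)"
    by (simp add: W_a)
  also have "\<dots> \<le> 2 * (\<integral>x. indicator B x * exp (- ((t\<^sup>2 / 4) * X a x / D)) \<partial>P)"
  proof -
    have i1: "integrable P (\<lambda>x. indicator B x * exp (- (mu * Xc a x)))"
      using W_int[where l=l and mu=mu and a=a and n=a, OF order_refl BP] by (simp add: W_a)
    have i2: "integrable P (\<lambda>x. indicator B x * exp (- ((t\<^sup>2 / 4) * X a x / D)))"
    proof (rule integrable_const_bound[where B=1])
      show "AE x in P. norm (indicator B x * exp (- ((t\<^sup>2 / 4) * X a x / D))) \<le> 1"
        using AE_space
      proof eventually_elim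
        case (elim x)
        have "0 \<le> (t\<^sup>2 / 4) * X a x / D" using X_pos[OF elim, of a] D0 by simp
        thus ?case by (simp add: indicator_def)
      qed
    qed (use BP in measurable)
    have "(\<integral>x. indicator B x * exp (- (mu * Xc a x)) \<partial>P) \<le> (\<integral>x. indicator B x * exp (- ((t\<^sup>2 / 4) * X a x / D)) \<partial>P)"
    proof (rule integral_mono_AE[OF i1 i2])
      show "AE x in P. indicator B x * exp (- (mu * Xc a x)) \<le> indicator B x * exp (- ((t\<^sup>2 / 4) * X a x / D))"
        using good AE_space
      proof eventually_elim
        case (elim x)
        have xp: "0 < X a x" using X_pos[OF elim(2)] .
        have "(t\<^sup>2 / 4) * X a x / D = t\<^sup>2 / (4 * D) * X a x" by simp
        also have "\<dots> \<le> mu * X a x" using mu_ge xp by (intro mult_right_mono) auto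
        finally have "(t\<^sup>2 / 4) * X a x / D \<le> mu * Xc a x" using elim by simp
        thus ?case by (simp add: indicator_def)
      qed
    qed
    thus ?thesis by simp
  qed
  also have "\<dots> = (\<integral>x. indicator B x * (2 * exp (- ((t\<^sup>2 / 4) * X a x / D))) \<partial>P)"
  proof -
    have "(\<integral>x. indicator B x * (2 * exp (- ((t\<^sup>2 / 4) * X a x / D))) \<partial>P)
       = (\<integral>x. 2 * (indicator B x * exp (- ((t\<^sup>2 / 4) * X a x / D))) \<partial>P)"
      by (simp add: mult.left_commute)
    also have "\<dots> = 2 * (\<integral>x. indicator B x * exp (- ((t\<^sup>2 / 4) * X a x / D)) \<partial>P)"
      by (rule integral_mult_right_zero)
    finally show ?thesis by simp
  qed
  finally show ?thesis unfolding Ev_def D_def .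
qed

end


lemma condexp_le:
  assumes S: "sigma_finite_subalgebra M G" and fin: "finite_measure M"
    and E[measurable]: "E \<in> sets M"
    and gG: "g \<in> borel_measurable G" and gi: "integrable M g"
    and hyp: "\<And>B. B \<in> sets G \<Longrightarrow> measure M (B \<inter> E) \<le> (\<integral>x. indicator B x * g x \<partial>M)"
  shows "AE x in M. real_cond_exp M G (indicator E) x \<le> g x"
proof -
  interpret S: sigma_finite_subalgebra M G by fact
  interpret finite_measure M by fact
  have sub: "sets G \<subseteq> sets M" "space G = space M" using S.subalg by (auto simp: subalgebra_def)
  define h where "h = real_cond_exp M G (indicator E)"
  have hG: "h \<in> borel_measurable G" unfolding h_def by simp
  have hM[measurable]: "h \<in> borel_measurable M" unfolding h_def by simp
  have gM[measurable]: "g \<in> borel_measurable M" using gi by auto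
  define C where "C = {x \<in> space M. g x < h x}"
  have CG: "C \<in> sets G"
  proof -
    have "{x \<in> space G. g x < h x} \<in> sets G" using gG hG by measurable
    thus ?thesis unfolding C_def using sub by simp
  qed
  have CM[measurable]: "C \<in> sets M" using CG sub by auto
  have iCE: "integrable M (\<lambda>x. indicator C x * indicator E x :: real)"
  proof (rule integrable_const_bound[where B=1])
    show "AE x in M. norm (indicator C x * indicator E x :: real) \<le> 1" by (simp add: indicator_def)
  qed measurable
  have ICG: "indicator C \<in> borel_measurable G" using CG by measurable
  have r: "integrable M (\<lambda>x. indicator C x * h x)" "(\<integral>x. indicator C x * h x \<partial>M) = (\<integral>x. indicator C x * indicator E x \<partial>M)"
    unfolding h_def by (rule S.real_cond_exp_intg[OF iCE ICG]; simp)+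
  have "(\<integral>x. indicator C x * indicator E x \<partial>M) = measure M (C \<inter> E)"
    by (simp add: indicator_inter_arith[symmetric])
  also have "\<dots> \<le> (\<integral>x. indicator C x * g x \<partial>M)" using hyp[OF CG] .
  finally have le: "(\<integral>x. indicator C x * h x \<partial>M) \<le> (\<integral>x. indicator C x * g x \<partial>M)" using r(2) by simp
  have iCg: "integrable M (\<lambda>x. indicator C x * g x)"
    using integrable_mult_indicator[OF CM gi] by simp
  define phi where "phi x = indicator C x * h x - indicator C x * g x" for x
  have phii: "integrable M phi" unfolding phi_def using r(1) iCg by simp
  have phin: "AE x in M. 0 \<le> phi x" by (rule AE_I2) (auto simp: phi_def C_def indicator_def)
  have "(\<integral>x. phi x \<partial>M) = 0"
  proof -
    have "(\<integral>x. phi x \<partial>M) = (\<integral>x. indicator C x * h x \<partial>M) - (\<integral>x. indicator C x * g x \<partial>M)"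
      unfolding phi_def using r(1) iCg by simp
    moreover have "0 \<le> (\<integral>x. phi x \<partial>M)" using phin by (rule integral_nonneg_AE)
    ultimately show ?thesis using le by linarith
  qed
  hence "AE x in M. phi x = 0" using integral_nonneg_eq_0_iff_AE[OF phii phin] by simp
  with AE_space show ?thesis
  proof eventually_elim
    case (elim x)
    show ?case
    proof (rule ccontr)
      assume "\<not> real_cond_exp M G (indicator E) x \<le> g x"
      hence "x \<in> C" using elim unfolding C_def h_def by auto
      thus False using elim \<open>\<not> real_cond_exp M G (indicator E) x \<le> g x\<close> unfolding phi_def h_def by simp
    qed
  qed
qed

context urn begin

lemma main_bound:
  fixes a :: nat and t S' b' :: real
  assumes t0: "0 \<le> t"
    and hS: "\<And>n. (\<Sum>k\<in>{a<..n}. (c k)\<^sup>2) \<le> S'"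
    and hb: "\<And>k. a < k \<Longrightarrow> c k \<le> b'"
    and hD: "0 < S' + t * max S' b'"
  shows "AE x in P. cond_prob P (gen_alg P A {a})
            {y \<in> space P. (SUP i\<in>{a..}. ereal \<bar>A i y / Ms i - A a y / Ms a\<bar>) > ereal (t * (A a y / Ms a))} x
          \<le> 2 * exp (- ((t\<^sup>2 / 4) * (A a x / Ms a) / (S' + t * max S' b')))"
proof -
  define D where "D = S' + t * max S' b'"
  define G where "G = gen_alg P A {a}"
  have GS: "sigma_finite_subalgebra P G" unfolding G_def by (rule gen_alg_subalg[OF prob]) simp
  have GF: "sets G \<subseteq> sets (F a)" unfolding G_def F_def by (rule gen_alg_mono) auto
  have Ev: "{y \<in> space P. (SUP i\<in>{a..}. ereal \<bar>A i y / Ms i - A a y / Ms a\<bar>) > ereal (t * (A a y / Ms a))}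
      = {y \<in> space P. \<exists>i\<ge>a. \<bar>X i y - X a y\<bar> > t * X a y}"
    by (auto simp: less_SUP_iff X_def)
  have EvP: "{y \<in> space P. \<exists>i\<ge>a. \<bar>X i y - X a y\<bar> > t * X a y} \<in> sets P" by measurable
  define g where "g x = 2 * exp (- ((t\<^sup>2 / 4) * (A a x / Ms a) / D))" for x
  have gG: "g \<in> borel_measurable G" unfolding g_def G_def using gen_alg_meas[of a "{a}" A P] by measurable
  have gi: "integrable P g"
  proof (rule integrable_const_bound[where B=2])
    show "AE x in P. norm (g x) \<le> 2" using AE_space
    proof eventually_elim
      case (elim x)
      have "0 \<le> (t\<^sup>2 / 4) * (A a x / Ms a) / D" using A_pos[OF elim, of a] Ms_pos[of a] hD D_def by simp
      thus ?case unfolding g_def by simp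
    qed
    show "g \<in> borel_measurable P" unfolding g_def by measurable
  qed
  have "AE x in P. real_cond_exp P G (indicator {y \<in> space P. \<exists>i\<ge>a. \<bar>X i y - X a y\<bar> > t * X a y}) x \<le> g x"
  proof (rule condexp_le[OF GS _ EvP gG gi])
    show "finite_measure P" by (rule finite_measure_axioms)
    fix B assume "B \<in> sets G"
    hence BF: "B \<in> sets (F a)" using GF by auto
    show "measure P (B \<inter> {y \<in> space P. \<exists>i\<ge>a. \<bar>X i y - X a y\<bar> > t * X a y}) \<le> (\<integral>x. indicator B x * g x \<partial>P)"
      using event_bound[OF t0 hS hb hD BF] unfolding g_def D_def X_def by simp
  qed
  thus ?thesis unfolding cond_prob_def Ev G_def g_def D_def .
qed

end

context urn begin

lemma m_le_Ms: "m n \<le> Ms n"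
  unfolding Ms_def using m_pos by (intro member_le_sum) (auto intro: less_imp_le)

lemma c_le1: "c n \<le> 1" unfolding c_def using m_le_Ms Ms_pos by simp

lemma part_a:
  assumes sm: "summable (\<lambda>n. (m n / Ms n)\<^sup>2)" and t0: "0 \<le> t"
  shows "AE x in P.
          cond_prob P (gen_alg P A {a})
            {y \<in> space P. (SUP i\<in>{a..}. ereal \<bar>A i y / Ms i - A a y / Ms a\<bar>) > ereal (t * (A a y / Ms a))} x
          \<le> 2 * exp (- ((t\<^sup>2 / 4) * (A a x / Ms a)
                / ((\<Sum>k. (m (k + Suc a) / Ms (k + Suc a))\<^sup>2)
                   + t * max (\<Sum>k. (m (k + Suc a) / Ms (k + Suc a))\<^sup>2)
                             (Sup {m n / Ms n | n. n > a}))))"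
proof (rule main_bound[OF t0])
  have sm': "summable (\<lambda>k. (m (k + Suc a) / Ms (k + Suc a))\<^sup>2)"
    using sm summable_iff_shift[of "\<lambda>n. (m n / Ms n)\<^sup>2" "Suc a"] by simp
  show "(\<Sum>k\<in>{a<..n}. (c k)\<^sup>2) \<le> (\<Sum>k. (m (k + Suc a) / Ms (k + Suc a))\<^sup>2)" for n
  proof -
    have "(\<Sum>k\<in>{a<..n}. (c k)\<^sup>2) = (\<Sum>k<n-a. (m (k + Suc a) / Ms (k + Suc a))\<^sup>2)"
      unfolding c_def
      by (rule sum.reindex_bij_witness[of _ "\<lambda>k. k + Suc a" "\<lambda>k. k - Suc a"]) auto
    also have "\<dots> \<le> (\<Sum>k. (m (k + Suc a) / Ms (k + Suc a))\<^sup>2)"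
      by (rule sum_le_suminf[OF sm']) auto
    finally show ?thesis .
  qed
  have bdd: "bdd_above {m n / Ms n | n. n > a}"
    by (rule bdd_aboveI[where M=1]) (use c_le1 in \<open>auto simp: c_def\<close>)
  show "c k \<le> Sup {m n / Ms n | n. n > a}" if "a < k" for k
    unfolding c_def by (rule cSup_upper[OF _ bdd]) (use that in auto)
  have Spos: "0 < (\<Sum>k. (m (k + Suc a) / Ms (k + Suc a))\<^sup>2)"
  proof (rule suminf_pos[OF sm'])
    fix k
    have "0 < m (k + Suc a) / Ms (k + Suc a)" using m_pos[of "k + Suc a"] Ms_pos[of "k + Suc a"] by simp
    thus "0 < (m (k + Suc a) / Ms (k + Suc a))\<^sup>2" by (rule zero_less_power)
  qed
  have "0 \<le> t * max (\<Sum>k. (m (k + Suc a) / Ms (k + Suc a))\<^sup>2) (Sup {m n / Ms n | n. n > a})"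
    using t0 Spos by (intro mult_nonneg_nonneg) auto
  thus "0 < (\<Sum>k. (m (k + Suc a) / Ms (k + Suc a))\<^sup>2)
                   + t * max (\<Sum>k. (m (k + Suc a) / Ms (k + Suc a))\<^sup>2)
                             (Sup {m n / Ms n | n. n > a})" using Spos by linarith
qed

lemma part_b:
  assumes bd: "bdd_above (range m)" and t0: "0 \<le> t"
  shows "AE x in P.
          cond_prob P (gen_alg P A {a})
            {y \<in> space P. (SUP i\<in>{a..}. ereal \<bar>A i y / Ms i - A a y / Ms a\<bar>) > ereal (t * (A a y / Ms a))} x
          \<le> 2 * exp (- (t\<^sup>2 / (4 * (1 + t))) * (A a x / Sup {m n | n. n > a}))"
proof -
  define Mx where "Mx = Sup {m n | n. n > a}"
  have bdd: "bdd_above {m n | n. n > a}" using bd by (rule bdd_above_mono) auto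
  have mle: "m k \<le> Mx" if "a < k" for k unfolding Mx_def by (rule cSup_upper[OF _ bdd]) (use that in auto)
  have Mx0: "0 < Mx" using mle[of "Suc a"] m_pos[of "Suc a"] by simp
  have Ma: "0 < Ms a" by (rule Ms_pos)
  have tele: "(\<Sum>k\<in>{a<..a + d}. (c k)\<^sup>2) \<le> Mx * (1 / Ms a - 1 / Ms (a + d))" for d
  proof (induction d)
    case 0 thus ?case by simp
  next
    case (Suc d)
    define M where "M = Ms (a + d)"
    define q where "q = m (Suc (a + d))"
    have M0: "0 < M" unfolding M_def by (rule Ms_pos)
    have q0: "0 < q" unfolding q_def by (rule m_pos)
    have M': "Ms (a + Suc d) = M + q" unfolding M_def q_def using Ms_Suc by simp
    have qle: "q \<le> Mx" unfolding q_def by (rule mle) simp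
    have "q * M \<le> Mx * (M + q)" using qle M0 q0 Mx0 by (intro mult_mono) auto
    hence f1: "q / (M + q) \<le> Mx / M" using M0 q0 by (simp add: field_simps)
    have "(c (Suc (a + d)))\<^sup>2 = (q / (M + q)) * (q / (M + q))"
      unfolding c_def using M' by (simp add: power2_eq_square q_def)
    also have "\<dots> \<le> (Mx / M) * (q / (M + q))" using f1 q0 M0 by (intro mult_right_mono) auto
    also have "\<dots> = Mx * (1 / M - 1 / (M + q))" using M0 q0 by (simp add: field_simps)
    finally have step: "(c (Suc (a + d)))\<^sup>2 \<le> Mx * (1 / M - 1 / (M + q))" .
    have "{a<..a + Suc d} = insert (Suc (a + d)) {a<..a + d}" by auto
    hence "(\<Sum>k\<in>{a<..a + Suc d}. (c k)\<^sup>2) = (c (Suc (a + d)))\<^sup>2 + (\<Sum>k\<in>{a<..a + d}. (c k)\<^sup>2)" by simp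
    also have "\<dots> \<le> Mx * (1 / M - 1 / (M + q)) + Mx * (1 / Ms a - 1 / M)"
      using step Suc.IH unfolding M_def by linarith
    also have "\<dots> = Mx * (1 / Ms a - 1 / Ms (a + Suc d))" using M' by (simp add: algebra_simps)
    finally show ?case .
  qed
  have hS: "(\<Sum>k\<in>{a<..n}. (c k)\<^sup>2) \<le> Mx / Ms a" for n
  proof (cases "a \<le> n")
    case True
    then obtain d where n: "n = a + d" using le_Suc_ex by blast
    have "(\<Sum>k\<in>{a<..n}. (c k)\<^sup>2) \<le> Mx * (1 / Ms a - 1 / Ms n)" using tele[of d] n by simp
    also have "\<dots> \<le> Mx * (1 / Ms a)" using Mx0 Ms_pos[of n] by (intro mult_left_mono) auto
    finally show ?thesis by simp
  next
    case False
    hence "{a<..n} = {}" by auto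
    thus ?thesis using Mx0 Ma by simp
  qed
  have hb: "c k \<le> Mx / Ms a" if "a < k" for k
  proof -
    have "c k = m k / Ms k" by (simp add: c_def)
    also have "\<dots> \<le> Mx / Ms k" using mle[OF that] Ms_pos[of k] by (simp add: divide_right_mono)
    also have "\<dots> \<le> Mx / Ms a" using Ms_mono[of a k] that Mx0 Ma by (intro divide_left_mono) auto
    finally show ?thesis .
  qed
  have hD: "0 < Mx / Ms a + t * max (Mx / Ms a) (Mx / Ms a)" using Mx0 Ma t0 by (simp add: add_pos_nonneg)
  have mb: "AE x in P.
          cond_prob P (gen_alg P A {a})
            {y \<in> space P. (SUP i\<in>{a..}. ereal \<bar>A i y / Ms i - A a y / Ms a\<bar>) > ereal (t * (A a y / Ms a))} x
          \<le> 2 * exp (- ((t\<^sup>2 / 4) * (A a x / Ms a) / (Mx / Ms a + t * max (Mx / Ms a) (Mx / Ms a))))"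
    apply (rule main_bound[OF t0])
    using hS hb hD by auto
  show ?thesis
    using mb
  proof eventually_elim
    case (elim x)
    have d: "Mx / Ms a + t * max (Mx / Ms a) (Mx / Ms a) = (1 + t) * (Mx / Ms a)" using Ma by (simp add: field_simps)
    have t1: "0 < 1 + t" using t0 by simp
    have e: "(t\<^sup>2 / 4) * (A a x / Ms a) / (Mx / Ms a + t * max (Mx / Ms a) (Mx / Ms a))
        = (t\<^sup>2 / (4 * (1 + t))) * (A a x / Mx)"
      unfolding d using Mx0 Ma t1 by (simp add: field_simps)
    have "cond_prob P (gen_alg P A {a})
            {y \<in> space P. (SUP i\<in>{a..}. ereal \<bar>A i y / Ms i - A a y / Ms a\<bar>) > ereal (t * (A a y / Ms a))} x
          \<le> 2 * exp (- ((t\<^sup>2 / (4 * (1 + t))) * (A a x / Mx)))" using elim[unfolded e] .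
    thus ?case unfolding Mx_def by simp
  qed
qed

end

theorem lemmaA1:
  fixes P :: "'w measure" and A :: "nat \<Rightarrow> 'w \<Rightarrow> real"
    and m :: "nat \<Rightarrow> real" and Ms :: "nat \<Rightarrow> real"
  assumes prob: "prob_space P"
    and m_pos: "\<And>n. m n > 0"
    and Ms_def: "\<And>n. Ms n = (\<Sum>i\<le>n. m i)"
    and A_meas: "\<And>n. A n \<in> borel_measurable P"
    and A_pos: "\<And>n x. x \<in> space P \<Longrightarrow> A n x > 0"
    and A0: "\<And>x. x \<in> space P \<Longrightarrow> A 0 x \<le> m 0"
    and step: "\<And>n. AE x in P.
        cond_prob P (gen_alg P A {..n}) {y \<in> space P. A (Suc n) y = A n y + m (Suc n)} x
          = A n x / Ms n
      \<and> cond_prob P (gen_alg P A {..n}) {y \<in> space P. A (Suc n) y = A n y} x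
          = (Ms n - A n x) / Ms n"
  shows
    "(summable (\<lambda>n. (m n / Ms n)\<^sup>2) \<longrightarrow>
       (\<forall>a t. t \<ge> 0 \<longrightarrow> (AE x in P.
          cond_prob P (gen_alg P A {a})
            {y \<in> space P. (SUP i\<in>{a..}. ereal \<bar>A i y / Ms i - A a y / Ms a\<bar>) > ereal (t * (A a y / Ms a))} x
          \<le> 2 * exp (- ((t\<^sup>2 / 4) * (A a x / Ms a)
                / ((\<Sum>k. (m (k + Suc a) / Ms (k + Suc a))\<^sup>2)
                   + t * max (\<Sum>k. (m (k + Suc a) / Ms (k + Suc a))\<^sup>2)
                             (Sup {m n / Ms n | n. n > a})))))))
     \<and>
     (bdd_above (range m) \<longrightarrow>
       (\<forall>a t. t \<ge> 0 \<longrightarrow> (AE x in P.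
          cond_prob P (gen_alg P A {a})
            {y \<in> space P. (SUP i\<in>{a..}. ereal \<bar>A i y / Ms i - A a y / Ms a\<bar>) > ereal (t * (A a y / Ms a))} x
          \<le> 2 * exp (- (t\<^sup>2 / (4 * (1 + t))) * (A a x / Sup {m n | n. n > a})))))"
proof -
  interpret U: urn P A m Ms
    by (rule urn.intro) (use prob m_pos Ms_def A_meas A_pos step in auto)
  show ?thesis using U.part_a U.part_b by blast
qed


end
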